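(* Let $k$ be an odd positive integer and let $\zeta$ be a primitive $2k$-th root of unity. Let $Q_k$ denote the set of quasipolarities of $\mathbb{Z}/2k\mathbb{Z}$. Then \[ \sum_{\pi\in Q_{k}}\prod_{j=0}^{2k-1}\frac{1+\zeta^{j-\pi(j)}}{1-\zeta^{j-\pi(j)}} = 0. \]
   Context: The affine general linear group $\overrightarrow{GL}(\mathbb{Z}/2k\mathbb{Z})$ consists of the maps $e^{u}.v:\mathbb{Z}/2k\mathbb{Z}\to\mathbb{Z}/2k\mathbb{Z}$, $x\mapsto vx+u$, with $u\in\mathbb{Z}/2k\mathbb{Z}$ and $v\in(\mathbb{Z}/2k\mathbb{Z})^{\times}$. A quasipolarity is an element $\pi$ of this group that is an involution ($\pi\circ\pi=\mathrm{id}$) and a derangement ($\pi(x)\neq x$ for all $x$). Elements $j\in\{0,\dots,2k-1\}$ are identified with residues mod $2k$; the exponent $j-\pi(j)$ is taken mod $2k$ (well defined since $\zeta^{2k}=1$), and denominators are nonzero because $\pi$ is a derangement. *)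

theory Defs
  imports Complex_Main
begin

text \<open>Elements of Z/nZ are represented by the naturals 0..<n. The affine map
  e^u.v : x \<mapsto> v x + u (mod n), with u a residue and v a unit.\<close>

definition affine_map :: "nat \<Rightarrow> nat \<Rightarrow> nat \<Rightarrow> (nat \<Rightarrow> nat)" where
  "affine_map n u v = (\<lambda>x. (v * x + u) mod n)"

definition affine_group :: "nat \<Rightarrow> (nat \<Rightarrow> nat) set" where
  "affine_group n = {affine_map n u v | u v. u < n \<and> v < n \<and> coprime v n}"

definition quasipolarities :: "nat \<Rightarrow> (nat \<Rightarrow> nat) set" where
  "quasipolarities n = {\<pi> \<in> affine_group n.
      (\<forall>x<n. \<pi> (\<pi> x) = x) \<and> (\<forall>x<n. \<pi> x \<noteq> x)}"

definition primitive_root_unity :: "nat \<Rightarrow> complex \<Rightarrow> bool" where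
  "primitive_root_unity n z \<longleftrightarrow> z ^ n = 1 \<and> (\<forall>m. 0 < m \<and> m < n \<longrightarrow> z ^ m \<noteq> 1)"

definition pow_diff_mod :: "nat \<Rightarrow> complex \<Rightarrow> nat \<Rightarrow> nat \<Rightarrow> complex" where
  "pow_diff_mod n z a b = z ^ nat ((int a - int b) mod int n)"

end

theory Submission
  imports Defs
begin

lemma key:
  fixes k :: nat
  assumes "odd k" and "\<pi> \<in> quasipolarities (2 * k)"
  shows "\<exists>j<2*k. (int j - int (\<pi> j)) mod (2 * int k) = int k"
proof -
  define n where "n = 2 * k"
  from assms(2) obtain u v where pi: "\<pi> = affine_map n u v" and uv: "u < n" "v < n" "coprime v n"
    and inv: "\<forall>x<n. \<pi> (\<pi> x) = x" and der: "\<forall>x<n. \<pi> x \<noteq> x"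
    unfolding quasipolarities_def affine_group_def n_def by blast
  have np: "n > 0" using uv by simp
  have ov: "odd v" using uv(3) unfolding n_def by auto
  have pu: "\<pi> 0 = u" using pi uv by (simp add: affine_map_def)
  have "\<pi> u = 0" using inv np pu by force
  hence d1: "n dvd (v * u + u)" using pi by (simp add: affine_map_def mod_eq_0_iff_dvd)
  define h where "h = (k + 1) div 2"
  have h2: "2 * h = k + 1" using assms(1) unfolding h_def by simp
  define x where "x = (u * h) mod n"
  have xn: "x < n" using np unfolding x_def by simp
  define D where "D = int v * int x + int u - int x"
  have xc: "int x mod int n = (int u * int h) mod int n" unfolding x_def
    by (simp add: zmod_int of_nat_mult)
  obtain q where q: "int x = int u * int h + int n * q"
    using xc by (metis mod_eq_dvd_iff dvd_def mult.commute diff_eq_eq add.commute)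
  obtain r where r: "int v = 2 * r + 1" using ov by (metis oddE of_nat_Suc of_nat_mult of_nat_numeral add.commute mult.commute of_nat_add of_nat_1)
  obtain s where s: "int v * int u + int u = int n * s" using d1
    by (metis dvd_def of_nat_mult of_nat_add)
  define m where "m = s + r * int u + 2 * (int v - 1) * q"
  have nk: "int n = 2 * int k" unfolding n_def by simp
  have "2 * D = 2 * (int k * m)"
  proof -
    have "2 * D = (int v - 1) * (2 * int x) + 2 * int u" unfolding D_def by (simp add: algebra_simps)
    also have "... = (int v - 1) * (int u * (int k + 1) + 2 * int n * q) + 2 * int u"
    proof -
      have "int k + 1 = 2 * int h" using h2 by linarith
      thus ?thesis using q by (simp add: algebra_simps)
    qed
    also have "... = (int v * int u + int u) + (int v - 1) * int u * int k + 2 * (int v - 1) * int n * q"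
      by (simp add: algebra_simps)
    also have "... = 2 * (int k * m)" unfolding m_def using s nk r by (simp add: algebra_simps)
    finally show ?thesis .
  qed
  hence Dm: "D = int k * m" by simp
  have pix: "int (\<pi> x) = (int x + D) mod int n"
    unfolding pi affine_map_def D_def by (simp add: zmod_int)
  have "odd m"
  proof
    assume "even m"
    then obtain m' where "m = 2 * m'" by blast
    hence "D = int n * m'" using Dm nk by simp
    hence "int (\<pi> x) = int x" using pix xn by simp
    thus False using der xn by simp
  qed
  then obtain m' where "m = 2 * m' + 1" by (meson oddE)
  hence "D = int k + int n * m'" using Dm nk by (simp add: algebra_simps)
  hence "(int x - int (\<pi> x)) mod int n = int k" using pix nk
  proof -
    assume DD: "D = int k + int n * m'"
    have "(int x - int (\<pi> x)) mod int n = (int x - (int x + D)) mod int n"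
      using pix by (simp add: mod_diff_right_eq)
    also have "... = (- int k + int n * (- m')) mod int n" using DD by (simp add: algebra_simps)
    also have "... = (- int k) mod int n" by (metis mod_mult_self2)
    also have "... = (int k + int n * (-1)) mod int n" using nk by simp
    also have "... = int k mod int n" by (metis mod_mult_self2)
    also have "... = int k" using nk np by simp
    finally show ?thesis .
  qed
  thus ?thesis using xn nk n_def by auto
qed

lemma zk:
  assumes "0 < k" and "primitive_root_unity (2 * k) (z::complex)"
  shows "z ^ k = -1"
proof -
  have "(z ^ k) ^ 2 = 1" using assms(2) unfolding primitive_root_unity_def
    by (simp add: power_mult[symmetric] mult.commute)
  hence "(z ^ k - 1) * (z ^ k + 1) = 0" by (simp add: algebra_simps power2_eq_square)
  moreover have "z ^ k \<noteq> 1" using assms unfolding primitive_root_unity_def by auto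
  ultimately show ?thesis by (simp add: add_eq_0_iff) (metis minus_equation_iff)
qed

theorem theorem2p1:
  fixes k :: nat and \<zeta> :: complex
  assumes "odd k" and "0 < k"
    and "primitive_root_unity (2 * k) \<zeta>"
  shows "(\<Sum>\<pi>\<in>quasipolarities (2 * k).
           \<Prod>j\<in>{0..<2 * k}. (1 + pow_diff_mod (2 * k) \<zeta> j (\<pi> j))
                            / (1 - pow_diff_mod (2 * k) \<zeta> j (\<pi> j))) = 0"
proof (rule sum.neutral, rule ballI)
  fix \<pi> assume p: "\<pi> \<in> quasipolarities (2 * k)"
  obtain j where j: "j < 2 * k" "(int j - int (\<pi> j)) mod (2 * int k) = int k"
    using key[OF assms(1) p] by blast
  have "pow_diff_mod (2 * k) \<zeta> j (\<pi> j) = -1"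
    unfolding pow_diff_mod_def using j(2) zk[OF assms(2,3)] by simp
  hence "(1 + pow_diff_mod (2 * k) \<zeta> j (\<pi> j)) / (1 - pow_diff_mod (2 * k) \<zeta> j (\<pi> j)) = 0"
    by simp
  thus "(\<Prod>j\<in>{0..<2 * k}. (1 + pow_diff_mod (2 * k) \<zeta> j (\<pi> j))
                            / (1 - pow_diff_mod (2 * k) \<zeta> j (\<pi> j))) = 0"
    using j(1) by (intro prod_zero) auto
qed

end
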